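(* Every $\Delta$-matroid representable over a finite field of characteristic two is strong.
   Context: A $\Delta$-matroid is a pair $(E,\mathcal{B})$, $E$ finite, $\mathcal{B}$ a nonempty family of subsets, such that for all $B,B'\in\mathcal{B}$ and $x\in B\triangle B'$ there is $y\in B\triangle B'$ with $B\triangle\{x,y\}\in\mathcal{B}$; it is strong if such $y$ can always be chosen with both $B\triangle\{x,y\},B'\triangle\{x,y\}\in\mathcal{B}$. For a symmetric or skew-symmetric matrix $\mathbf{A}$ over a field $K$ indexed by $E$, $D(\mathbf{A})=(E,\{I\subseteq E:\mathbf{A}[I]\text{ nonsingular}\})$ (the empty principal submatrix counts as nonsingular). For $X\subseteq E$, the twist $D*X$ has bases $\{B\triangle X:B\in\mathcal{B}\}$. $D$ is representable over $K$ if $D=D(\mathbf{A})*X$ for some symmetric or skew-symmetric matrix $\mathbf{A}$ over $K$ and some $X\subseteq E$. *)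

theory Defs
  imports Main "HOL-Combinatorics.Permutations"
begin

definition symdiff :: "'a set \<Rightarrow> 'a set \<Rightarrow> 'a set" (infixl \<open>\<triangle>\<close> 65) where
  "A \<triangle> B = (A - B) \<union> (B - A)"

definition delta_matroid :: "'a set \<Rightarrow> 'a set set \<Rightarrow> bool" where
  "delta_matroid E Bs \<longleftrightarrow> finite E \<and> Bs \<noteq> {} \<and> (\<forall>B\<in>Bs. B \<subseteq> E) \<and>
     (\<forall>B\<in>Bs. \<forall>B'\<in>Bs. \<forall>x\<in>B \<triangle> B'. \<exists>y\<in>B \<triangle> B'. B \<triangle> {x, y} \<in> Bs)"

definition strong_delta_matroid :: "'a set \<Rightarrow> 'a set set \<Rightarrow> bool" where
  "strong_delta_matroid E Bs \<longleftrightarrow> finite E \<and> Bs \<noteq> {} \<and> (\<forall>B\<in>Bs. B \<subseteq> E) \<and>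
     (\<forall>B\<in>Bs. \<forall>B'\<in>Bs. \<forall>x\<in>B \<triangle> B'. \<exists>y\<in>B \<triangle> B'.
        B \<triangle> {x, y} \<in> Bs \<and> B' \<triangle> {x, y} \<in> Bs)"

text \<open>Determinant of the principal submatrix A[I] (Leibniz formula over the
  finite index set I); the empty principal submatrix has determinant 1.\<close>
definition principal_det :: "('a \<Rightarrow> 'a \<Rightarrow> 'k::comm_ring_1) \<Rightarrow> 'a set \<Rightarrow> 'k" where
  "principal_det A I = (\<Sum>p\<in>{p. p permutes I}. of_int (sign p) * (\<Prod>i\<in>I. A i (p i)))"

definition symmetric_on :: "'a set \<Rightarrow> ('a \<Rightarrow> 'a \<Rightarrow> 'k) \<Rightarrow> bool" where
  "symmetric_on E A \<longleftrightarrow> (\<forall>i\<in>E. \<forall>j\<in>E. A i j = A j i)"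

definition skew_symmetric_on :: "'a set \<Rightarrow> ('a \<Rightarrow> 'a \<Rightarrow> 'k::ring_1) \<Rightarrow> bool" where
  "skew_symmetric_on E A \<longleftrightarrow> (\<forall>i\<in>E. \<forall>j\<in>E. A i j = - A j i) \<and> (\<forall>i\<in>E. A i i = 0)"

definition DA_bases :: "'a set \<Rightarrow> ('a \<Rightarrow> 'a \<Rightarrow> 'k::comm_ring_1) \<Rightarrow> 'a set set" where
  "DA_bases E A = {I. I \<subseteq> E \<and> principal_det A I \<noteq> 0}"

definition twist :: "'a set set \<Rightarrow> 'a set \<Rightarrow> 'a set set" where
  "twist Bs X = (\<lambda>B. B \<triangle> X) ` Bs"

definition representable_over :: "'k::field itself \<Rightarrow> 'a set \<Rightarrow> 'a set set \<Rightarrow> bool" where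
  "representable_over _ E Bs \<longleftrightarrow>
     (\<exists>(A::'a \<Rightarrow> 'a \<Rightarrow> 'k) X. X \<subseteq> E \<and> (symmetric_on E A \<or> skew_symmetric_on E A) \<and>
        Bs = twist (DA_bases E A) X)"

end

theory Submission imports Defs "Jordan_Normal_Form.Determinant" begin

lemma char2_two: assumes "CHAR('k::field) = 2" shows "(2::'k) = 0"
  by (metis assms of_nat_CHAR of_nat_numeral)

lemma char2_add_self: assumes "CHAR('k::field) = 2" shows "(x::'k) + x = 0"
proof -
  have "x + x = 2 * x" by simp
  thus ?thesis using char2_two[OF assms] by simp
qed

lemma char2_neg: assumes "CHAR('k::field) = 2" shows "- (x::'k) = x"
  using char2_add_self[OF assms, of x] by (simp add: add_eq_0_iff2)

lemma char2_minus: assumes "CHAR('k::field) = 2" shows "(x::'k) - y = x + y"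
  using char2_neg[OF assms, of y] by (metis diff_conv_add_uminus)

lemma char2_sign: assumes "CHAR('k::field) = 2" shows "(of_int (sign p) :: 'k) = 1"
  using char2_neg[OF assms, of 1] by (auto simp: sign_def)

lemma pdet_char2: assumes "CHAR('k::field) = 2"
  shows "principal_det (A::'a \<Rightarrow> 'a \<Rightarrow> 'k) I = (\<Sum>p\<in>{p. p permutes I}. \<Prod>i\<in>I. A i (p i))"
  unfolding principal_det_def char2_sign[OF assms] by simp

lemma pdet_reindex:
  assumes "CHAR('k::field) = 2" and h: "bij_betw h I' I"
  shows "principal_det (A::'a \<Rightarrow> 'a \<Rightarrow> 'k) I = principal_det (\<lambda>i j. A (h i) (h j)) I'"
proof -
  let ?phi = "\<lambda>\<pi> x. if x \<in> I then h (\<pi> (inv_into I' h x)) else x"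
  have bp: "bij_betw ?phi {\<pi>. \<pi> permutes I'} {\<pi>. \<pi> permutes I}"
    by (rule bij_betw_permutations[OF h])
  have "(\<Sum>p\<in>{p. p permutes I}. \<Prod>i\<in>I. A i (p i)) = (\<Sum>\<pi>\<in>{\<pi>. \<pi> permutes I'}. \<Prod>i\<in>I. A i (?phi \<pi> i))"
    by (rule sum.reindex_bij_betw[OF bp, symmetric])
  also have "\<dots> = (\<Sum>\<pi>\<in>{\<pi>. \<pi> permutes I'}. \<Prod>i\<in>I'. A (h i) (h (\<pi> i)))"
  proof (rule sum.cong[OF refl])
    fix \<pi> assume "\<pi> \<in> {\<pi>. \<pi> permutes I'}"
    have "(\<Prod>i\<in>I. A i (?phi \<pi> i)) = (\<Prod>i\<in>I'. A (h i) (?phi \<pi> (h i)))"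
      by (rule prod.reindex_bij_betw[OF h, symmetric])
    also have "\<dots> = (\<Prod>i\<in>I'. A (h i) (h (\<pi> i)))"
      apply (rule prod.cong[OF refl])
      using h by (auto simp: bij_betw_inv_into_left bij_betwE)
    finally show "(\<Prod>i\<in>I. A i (?phi \<pi> i)) = (\<Prod>i\<in>I'. A (h i) (h (\<pi> i)))" .
  qed
  finally show ?thesis unfolding pdet_char2[OF assms(1)] .
qed

lemma pdet_colsel:
  assumes "finite V" "W \<subseteq> V"
  shows "principal_det (\<lambda>i j. if j \<in> W then C i j else (if i = j then 1 else 0)) V = principal_det (C::'a \<Rightarrow> 'a \<Rightarrow> 'k::field) W"
proof -
  let ?M = "\<lambda>i j. if j \<in> W then C i j else (if i = j then 1 else 0)"
  let ?t = "\<lambda>p. of_int (sign p) * (\<Prod>i\<in>V. ?M i (p i))"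
  have fin: "finite {p. p permutes V}" using assms(1) by (simp add: finite_permutations)
  have sub: "{p. p permutes W} \<subseteq> {p. p permutes V}" using assms(2) permutes_subset by blast
  have zero: "?t p = 0" if p: "p \<in> {p. p permutes V} - {p. p permutes W}" for p
  proof (rule ccontr)
    assume "?t p \<noteq> 0"
    hence "(\<Prod>i\<in>V. ?M i (p i)) \<noteq> 0" by auto
    hence nz: "\<forall>i\<in>V. ?M i (p i) \<noteq> 0" using assms(1) by (simp add: prod_zero_iff)
    have pV: "p permutes V" using p by auto
    have inW: "p i \<in> W" if "i \<in> W" for i
    proof (rule ccontr)
      assume "p i \<notin> W"
      with nz that assms(2) have "i = p i" by (auto split: if_splits)
      with \<open>p i \<notin> W\<close> that show False by simp
    qed
    have injW: "inj_on p W" using pV permutes_inj_on by blast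
    have imgW: "p ` W = W"
      using inW injW assms by (meson endo_inj_surj finite_subset image_subsetI)
    have "\<forall>x\<in>V - W. p x = x"
    proof
      fix x assume x: "x \<in> V - W"
      have "p x \<notin> W"
      proof
        assume "p x \<in> W"
        then obtain w where "w \<in> W" "p x = p w" using imgW by (metis imageE)
        hence "x = w" using permutes_inj[OF pV] by (simp add: inj_eq)
        with x \<open>w \<in> W\<close> show False by simp
      qed
      with nz x show "p x = x" by (auto split: if_splits)
    qed
    hence "p permutes W" using permutes_superset[OF pV] by blast
    with p show False by simp
  qed
  have "(\<Sum>p\<in>{p. p permutes V}. ?t p) = (\<Sum>p\<in>{p. p permutes W}. ?t p)"
    by (rule sum.mono_neutral_right[OF fin sub]) (use zero in auto)
  also have "\<dots> = (\<Sum>p\<in>{p. p permutes W}. of_int (sign p) * (\<Prod>i\<in>W. C i (p i)))"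
  proof (rule sum.cong[OF refl])
    fix p assume "p \<in> {p. p permutes W}"
    hence pW: "p permutes W" by simp
    have "(\<Prod>i\<in>V. ?M i (p i)) = (\<Prod>i\<in>W. ?M i (p i)) * (\<Prod>i\<in>V-W. ?M i (p i))"
      using assms by (metis (no_types, lifting) Diff_partition Diff_disjoint finite_Diff finite_subset prod.union_disjoint)
    also have "(\<Prod>i\<in>V-W. ?M i (p i)) = 1"
      using pW by (intro prod.neutral) (auto simp: permutes_not_in)
    also have "(\<Prod>i\<in>W. ?M i (p i)) = (\<Prod>i\<in>W. C i (p i))"
      using pW by (intro prod.cong) (auto simp: permutes_in_image)
    finally show "?t p = of_int (sign p) * (\<Prod>i\<in>W. C i (p i))" by simp
  qed
  finally show ?thesis unfolding principal_det_def .
qed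

definition selm :: "nat \<Rightarrow> (nat \<Rightarrow> nat \<Rightarrow> 'k::field) \<Rightarrow> nat set \<Rightarrow> 'k mat" where
  "selm n C W = mat n n (\<lambda>(i,j). if j \<in> W then C i j else (if i = j then 1 else 0))"

lemma selm_carrier[simp]: "selm n C W \<in> carrier_mat n n"
  unfolding selm_def by simp

lemma selm_index: "i < n \<Longrightarrow> j < n \<Longrightarrow> selm n C W $$ (i,j) = (if j \<in> W then C i j else (if i = j then 1 else 0))"
  unfolding selm_def by simp

lemma det_mat_pdet: "det (mat n n f) = principal_det (\<lambda>i j. f (i,j)) {0..<n}"
  unfolding det_def principal_det_def
  by (auto intro!: sum.cong prod.cong simp: permutes_in_image)

lemma det_selm: "W \<subseteq> {0..<n} \<Longrightarrow> det (selm n C W) = principal_det C W"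
  unfolding selm_def det_mat_pdet by (simp add: pdet_colsel)

lemma mult_entry:
  assumes "A \<in> carrier_mat n n" "B \<in> carrier_mat n n" "i < n" "j < n"
  shows "(A * B) $$ (i,j) = (\<Sum>k\<in>{0..<n}. A $$ (i,k) * B $$ (k,j))"
  using assms by (simp add: scalar_prod_def)

lemma mat_inverse_ex:
  assumes "(P::'k::field mat) \<in> carrier_mat n n" "det P \<noteq> 0"
  obtains Q where "Q \<in> carrier_mat n n" "P * Q = 1\<^sub>m n" "Q * P = 1\<^sub>m n"
  using det_non_zero_imp_unit[OF assms, of "()"] unfolding Units_def ring_mat_def by auto

lemma mat_cancel_left:
  assumes "(P::'k::field mat) \<in> carrier_mat n n" "det P \<noteq> 0"
    and "X \<in> carrier_mat n n" "Y \<in> carrier_mat n n" "P * X = P * Y"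
  shows "X = Y"
proof -
  obtain Q where Q: "Q \<in> carrier_mat n n" "P * Q = 1\<^sub>m n" "Q * P = 1\<^sub>m n"
    using mat_inverse_ex[OF assms(1,2)] by blast
  have "X = (Q * P) * X" unfolding Q(3) using assms(3) by simp
  also have "\<dots> = Q * (P * X)" using Q(1) assms(1,3) by simp
  also have "\<dots> = Q * (P * Y)" using assms by simp
  also have "\<dots> = (Q * P) * Y" using Q(1) assms(1,4) by simp
  also have "\<dots> = Y" unfolding Q(3) using assms(4) by simp
  finally show ?thesis .
qed

lemma sum_delta_mult_right: "finite S \<Longrightarrow> (\<Sum>k\<in>S. f k * (if k = j then (1::'k::field) else 0)) = (if j \<in> S then f j else 0)"
  by (simp add: if_distrib[of "\<lambda>x. f _ * x"] sum.delta' cong: if_cong)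

lemma pivot:
  fixes A :: "nat \<Rightarrow> nat \<Rightarrow> 'k::field"
  assumes c2: "CHAR('k) = 2" and sym: "\<And>i j. i < n \<Longrightarrow> j < n \<Longrightarrow> A i j = A j i"
    and F: "F \<subseteq> {0..<n}" and nz: "principal_det A F \<noteq> 0"
  obtains cf where "\<And>i j. i < n \<Longrightarrow> j < n \<Longrightarrow> cf i j = cf j i"
    and "\<And>W. W \<subseteq> {0..<n} \<Longrightarrow> selm n A F * selm n cf W = selm n A (F \<triangle> W)"
proof -
  define V where "V = {0..<n}"
  define M where "M = selm n A F"
  define N where "N = selm n A (V - F)"
  have M: "M \<in> carrier_mat n n" and N: "N \<in> carrier_mat n n" by (simp_all add: M_def N_def)
  have dM: "det M \<noteq> 0" using det_selm[OF F, of A] nz unfolding M_def by simp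
  obtain Q where Q: "Q \<in> carrier_mat n n" "M * Q = 1\<^sub>m n" "Q * M = 1\<^sub>m n"
    using mat_inverse_ex[OF M dM] by blast
  define C where "C = Q * N"
  have C: "C \<in> carrier_mat n n" using Q N C_def by simp
  have MC: "M * C = N"
  proof -
    have "M * C = (M * Q) * N" unfolding C_def using M Q(1) N by simp
    also have "\<dots> = N" unfolding Q(2) using N by simp
    finally show ?thesis .
  qed
  define cf where "cf i j = C $$ (i,j)" for i j
  have prod: "M * selm n cf W = selm n A (F \<triangle> W)" if W: "W \<subseteq> V" for W
  proof (rule eq_matI)
    fix i j assume "i < dim_row (selm n A (F \<triangle> W))" "j < dim_col (selm n A (F \<triangle> W))"
    hence ij: "i < n" "j < n" by (simp_all add: selm_def)
    show "(M * selm n cf W) $$ (i,j) = selm n A (F \<triangle> W) $$ (i,j)"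
    proof (cases "j \<in> W")
      case True
      have "(M * selm n cf W) $$ (i,j) = (\<Sum>k\<in>{0..<n}. M $$ (i,k) * C $$ (k,j))"
        using mult_entry[OF M selm_carrier ij] True ij by (auto intro!: sum.cong simp: selm_index cf_def)
      also have "\<dots> = (M * C) $$ (i,j)" using mult_entry[OF M C ij] by simp
      also have "\<dots> = N $$ (i,j)" by (simp add: MC)
      finally show ?thesis using True ij F by (auto simp: N_def selm_index V_def symdiff_def)
    next
      case False
      have "(M * selm n cf W) $$ (i,j) = (\<Sum>k\<in>{0..<n}. M $$ (i,k) * (if k = j then 1 else 0))"
        using mult_entry[OF M selm_carrier ij] False ij by (auto intro!: sum.cong simp: selm_index)
      also have "\<dots> = M $$ (i,j)" using ij by (simp add: sum_delta_mult_right)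
      finally show ?thesis using False ij by (auto simp: M_def selm_index symdiff_def)
    qed
  qed (simp_all add: M_def selm_def)
  have NMT: "N * transpose_mat M = M * transpose_mat N"
  proof (rule eq_matI)
    fix i k assume "i < dim_row (M * transpose_mat N)" "k < dim_col (M * transpose_mat N)"
    hence ik: "i < n" "k < n" using M N by auto
    have e1: "(N * transpose_mat M) $$ (i,k) = (\<Sum>j\<in>{0..<n}. N $$ (i,j) * M $$ (k,j))"
      using mult_entry[of N n "transpose_mat M", OF N _ ik] M ik by (auto intro!: sum.cong)
    have e2: "(M * transpose_mat N) $$ (i,k) = (\<Sum>j\<in>{0..<n}. M $$ (i,j) * N $$ (k,j))"
      using mult_entry[of M n "transpose_mat N", OF M _ ik] N ik by (auto intro!: sum.cong)
    have s1: "(\<Sum>j\<in>{0..<n}. N $$ (i,j) * M $$ (k,j)) =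
       (\<Sum>j\<in>{0..<n}. (if j = i then (if i \<in> F then A k i else 0) else 0) + (if j = k then (if k \<in> F then 0 else A i k) else 0))"
      using F ik by (intro sum.cong) (auto simp: M_def N_def selm_index V_def)
    have s2: "(\<Sum>j\<in>{0..<n}. M $$ (i,j) * N $$ (k,j)) =
       (\<Sum>j\<in>{0..<n}. (if j = k then (if k \<in> F then A i k else 0) else 0) + (if j = i then (if i \<in> F then 0 else A k i) else 0))"
      using F ik by (intro sum.cong) (auto simp: M_def N_def selm_index V_def)
    have "(\<Sum>j\<in>{0..<n}. N $$ (i,j) * M $$ (k,j)) = (if i \<in> F then A k i else 0) + (if k \<in> F then 0 else A i k)"
      unfolding s1 sum.distrib using ik by (simp add: sum.delta)
    moreover have "(\<Sum>j\<in>{0..<n}. M $$ (i,j) * N $$ (k,j)) = (if k \<in> F then A i k else 0) + (if i \<in> F then 0 else A k i)"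
      unfolding s2 sum.distrib using ik by (simp add: sum.delta)
    moreover have "A k i = A i k" using sym ik by simp
    ultimately show "(N * transpose_mat M) $$ (i,k) = (M * transpose_mat N) $$ (i,k)"
      unfolding e1 e2 using char2_add_self[OF c2, of "A i k"] by (auto simp: add.commute)
  qed (use M N in auto)
  have MTQT: "transpose_mat M * transpose_mat Q = 1\<^sub>m n"
    using transpose_mult[OF Q(1) M] Q(3) by simp
  have "C = Q * (N * (transpose_mat M * transpose_mat Q))" unfolding MTQT C_def using N by simp
  also have "\<dots> = Q * ((N * transpose_mat M) * transpose_mat Q)" using M N Q(1) by simp
  also have "\<dots> = Q * ((M * transpose_mat N) * transpose_mat Q)" by (simp only: NMT)
  also have "\<dots> = Q * (M * (transpose_mat N * transpose_mat Q))" using M N Q(1) by simp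
  also have "\<dots> = (Q * M) * (transpose_mat N * transpose_mat Q)"
    by (rule assoc_mult_mat[symmetric, of _ n n _ n _ n]) (use M N Q(1) in auto)
  also have "\<dots> = transpose_mat N * transpose_mat Q" unfolding Q(3) using N Q(1) by simp
  also have "\<dots> = transpose_mat C" unfolding C_def using transpose_mult[OF Q(1) N] by simp
  finally have CT: "C = transpose_mat C" .
  have "cf i j = cf j i" if "i < n" "j < n" for i j
  proof -
    have "cf i j = transpose_mat C $$ (i,j)" unfolding cf_def using CT by simp
    also have "\<dots> = cf j i" unfolding cf_def using that C by simp
    finally show ?thesis .
  qed
  moreover have "selm n A F * selm n cf W = selm n A (F \<triangle> W)" if "W \<subseteq> {0..<n}" for W
    using prod[of W] that unfolding M_def V_def by simp
  ultimately show ?thesis using that by blast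
qed

lemma pivot_rel:
  fixes A :: "nat \<Rightarrow> nat \<Rightarrow> 'k::field"
  assumes F: "F \<subseteq> {0..<n}" and G: "G \<subseteq> {0..<n}" and nzF: "principal_det A F \<noteq> 0"
    and cfP: "\<And>W. W \<subseteq> {0..<n} \<Longrightarrow> selm n A F * selm n cf W = selm n A (F \<triangle> W)"
    and cgP: "\<And>W. W \<subseteq> {0..<n} \<Longrightarrow> selm n A G * selm n cg W = selm n A (G \<triangle> W)"
    and k: "k \<in> F \<triangle> G" and x: "x \<in> F \<triangle> G"
  shows "(\<Sum>j\<in>F \<triangle> G. cf k j * cg j x) = (if k = x then 1 else 0)"
proof -
  define V where "V = {0..<n}"
  define U where "U = F \<triangle> G"
  have UV: "U \<subseteq> V" using F G by (auto simp: U_def V_def symdiff_def)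
  define X where "X = selm n cf U"
  define Y where "Y = selm n cf (V - U)"
  define Z where "Z = selm n cg V"
  define M where "M = selm n A F"
  have M: "M \<in> carrier_mat n n" by (simp add: M_def)
  have dM: "det M \<noteq> 0" using det_selm[OF F, of A] nzF unfolding M_def by simp
  have "F \<triangle> (F \<triangle> G) = G" by (auto simp: symdiff_def)
  hence h1: "M * X = selm n A G"
    using cfP[of U] UV unfolding M_def X_def V_def U_def by simp
  have h2: "selm n A G * Z = selm n A (G \<triangle> V)" using cgP[of V] unfolding Z_def V_def by simp
  have eqs: "G \<triangle> V = F \<triangle> (V - U)" using F G unfolding U_def V_def symdiff_def by auto
  have h3: "M * Y = selm n A (G \<triangle> V)" unfolding eqs M_def Y_def using cfP[of "V - U"] by (simp add: V_def)
  have "M * (X * Z) = (M * X) * Z"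
    by (rule assoc_mult_mat[symmetric, of _ n n _ n _ n]) (use M in \<open>auto simp: X_def Z_def\<close>)
  also have "\<dots> = M * Y" unfolding h1 h2 h3 ..
  finally have XZ: "X * Z = Y"
    by (rule mat_cancel_left[OF M dM, rotated 2]) (auto simp: X_def Y_def Z_def intro!: mult_carrier_mat[OF selm_carrier selm_carrier])
  have kx: "k < n" "x < n" "k \<in> U" "x \<in> U" using k x UV by (auto simp: U_def V_def)
  have "(X * Z) $$ (k,x) = (\<Sum>j\<in>{0..<n}. (if j \<in> U then cf k j else (if k = j then 1 else 0)) * cg j x)"
    using mult_entry[of X n Z, OF _ _ kx(1,2)] kx by (auto intro!: sum.cong simp: X_def Z_def selm_index V_def)
  also have "\<dots> = (\<Sum>j\<in>U. (if j \<in> U then cf k j else (if k = j then 1 else 0)) * cg j x)"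
    by (rule sum.mono_neutral_right) (use UV kx in \<open>auto simp: V_def\<close>)
  also have "\<dots> = (\<Sum>j\<in>U. cf k j * cg j x)" by simp
  finally have "(\<Sum>j\<in>U. cf k j * cg j x) = Y $$ (k,x)" unfolding XZ ..
  also have "\<dots> = (if k = x then 1 else 0)" using kx by (simp add: Y_def selm_index)
  finally show ?thesis unfolding U_def .
qed

lemma char2_double_sum:
  assumes c2: "CHAR('k::field) = 2" and fin: "finite U"
    and sym: "\<And>k i. k \<in> U \<Longrightarrow> i \<in> U \<Longrightarrow> f k i = f i k"
  shows "(\<Sum>k\<in>U. \<Sum>i\<in>U. f k i) = (\<Sum>k\<in>U. (f k k :: 'k))"
  using fin sym
proof (induction U rule: finite_induct)
  case empty
  then show ?case by simp
next
  case (insert z U)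
  have IH: "(\<Sum>k\<in>U. \<Sum>i\<in>U. f k i) = (\<Sum>k\<in>U. f k k)" using insert by auto
  have s: "(\<Sum>k\<in>U. f k z) = (\<Sum>k\<in>U. f z k)" using insert.prems by (intro sum.cong) auto
  have "(\<Sum>k\<in>insert z U. \<Sum>i\<in>insert z U. f k i)
      = f z z + (\<Sum>i\<in>U. f z i) + ((\<Sum>k\<in>U. f k z) + (\<Sum>k\<in>U. \<Sum>i\<in>U. f k i))"
    using insert.hyps by (simp add: sum.distrib algebra_simps)
  also have "\<dots> = f z z + (\<Sum>k\<in>U. f k k) + ((\<Sum>i\<in>U. f z i) + (\<Sum>i\<in>U. f z i))"
    unfolding s IH by (simp add: algebra_simps)
  also have "\<dots> = f z z + (\<Sum>k\<in>U. f k k)" using char2_add_self[OF c2] by simp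
  finally show ?case using insert.hyps by simp
qed

lemma perm_single: "{p. p permutes {x}} = {id}" by (simp add: permutes_sing)

lemma pdet_single: "principal_det (a::'b \<Rightarrow> 'b \<Rightarrow> 'k::comm_ring_1) {x} = a x x"
  unfolding principal_det_def perm_single by simp

lemma pdet_pair:
  assumes c2: "CHAR('k::field) = 2" and xy: "x \<noteq> y"
  shows "principal_det (a::'b \<Rightarrow> 'b \<Rightarrow> 'k) {x,y} = a x x * a y y + a x y * a y x"
proof -
  have P: "{p. p permutes {x,y}} = {id, Transposition.transpose x y}"
    unfolding set_eq_iff using permutes_doubleton_iff[of _ x y] by simp
  have ne: "id \<noteq> Transposition.transpose x y" using xy
    by (metis id_apply transpose_apply_first)
  have "(\<Sum>p\<in>{id, Transposition.transpose x y}. \<Prod>i\<in>{x,y}. a i (p i)) = (\<Prod>i\<in>{x,y}. a i (id i)) + (\<Prod>i\<in>{x,y}. a i (Transposition.transpose x y i))"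
    using ne by simp
  also have "\<dots> = a x x * a y y + a x y * a y x" using xy by simp
  finally show ?thesis unfolding pdet_char2[OF c2] P .
qed

lemma core_half:
  fixes a b :: "'b \<Rightarrow> 'b \<Rightarrow> 'k::field"
  assumes c2: "CHAR('k) = 2" and fin: "finite U" and x: "x \<in> U"
    and syma: "\<And>i j. i \<in> U \<Longrightarrow> j \<in> U \<Longrightarrow> a i j = a j i"
    and symb: "\<And>i j. i \<in> U \<Longrightarrow> j \<in> U \<Longrightarrow> b i j = b j i"
    and R1: "\<And>k. k \<in> U \<Longrightarrow> (\<Sum>j\<in>U. a k j * b j x) = (if k = x then 1 else 0)"
    and axx: "a x x \<noteq> 0" and bxx: "b x x = 0"
  shows "\<exists>y\<in>U. y \<noteq> x \<and> a x x * a y y + a x y * a y x \<noteq> 0 \<and> b x y \<noteq> 0"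
proof (rule ccontr)
  assume "\<not> ?thesis"
  hence H: "\<And>y. y \<in> U \<Longrightarrow> y \<noteq> x \<Longrightarrow> b x y \<noteq> 0 \<Longrightarrow> a x x * a y y + a x y * a y x = 0" by blast
  define c where "c k = b k x" for k
  have cx: "c x = 0" using bxx c_def by simp
  have "(\<Sum>k\<in>U. \<Sum>i\<in>U. c k * a k i * c i) = (\<Sum>k\<in>U. c k * (\<Sum>i\<in>U. a k i * c i))"
    by (simp add: sum_distrib_left mult.assoc)
  also have "\<dots> = (\<Sum>k\<in>U. c k * (if k = x then 1 else 0))"
    using R1 by (intro sum.cong) (auto simp: c_def)
  also have "\<dots> = 0" using cx fin by (simp add: sum_delta_mult_right)
  finally have Q1: "(\<Sum>k\<in>U. \<Sum>i\<in>U. c k * a k i * c i) = 0" .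
  have "(\<Sum>k\<in>U. \<Sum>i\<in>U. c k * a k i * c i) = (\<Sum>k\<in>U. c k * a k k * c k)"
    by (rule char2_double_sum[OF c2 fin]) (simp add: syma mult.commute)
  with Q1 have Q2: "(\<Sum>k\<in>U. c k * a k k * c k) = 0" by simp
  have termeq: "a x x * (c k * a k k * c k) = (a x k * c k) * (a x k * c k)" if k: "k \<in> U" for k
  proof (cases "k = x \<or> c k = 0")
    case True
    then show ?thesis using cx by auto
  next
    case False
    hence "k \<noteq> x" "b x k \<noteq> 0" using symb[OF x k] by (auto simp: c_def)
    from H[OF k this] have "a x x * a k k + a x k * a k x = 0" .
    hence "a x x * a k k = a x k * a k x"
      using char2_neg[OF c2, of "a x k * a k x"] by (simp add: add_eq_0_iff2)
    thus ?thesis using syma[OF x k] by (simp add: algebra_simps)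
  qed
  have "a x x * 0 = (\<Sum>k\<in>U. a x x * (c k * a k k * c k))" unfolding Q2[symmetric] sum_distrib_left ..
  also have "\<dots> = (\<Sum>k\<in>U. (a x k * c k) * (a x k * c k))" using termeq by (intro sum.cong) auto
  also have "\<dots> = (\<Sum>k\<in>U. \<Sum>i\<in>U. (a x k * c k) * (a x i * c i))"
    by (rule char2_double_sum[OF c2 fin, symmetric]) (simp add: mult.commute)
  also have "\<dots> = (\<Sum>k\<in>U. a x k * c k) * (\<Sum>i\<in>U. a x i * c i)"
    by (simp add: sum_product)
  also have "(\<Sum>k\<in>U. a x k * c k) = 1" using R1[OF x] by (simp add: c_def)
  finally show False by simp
qed

lemma core:
  fixes a b :: "'b \<Rightarrow> 'b \<Rightarrow> 'k::field"
  assumes c2: "CHAR('k) = 2" and fin: "finite U" and x: "x \<in> U"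
    and syma: "\<And>i j. i \<in> U \<Longrightarrow> j \<in> U \<Longrightarrow> a i j = a j i"
    and symb: "\<And>i j. i \<in> U \<Longrightarrow> j \<in> U \<Longrightarrow> b i j = b j i"
    and R1: "\<And>k. k \<in> U \<Longrightarrow> (\<Sum>j\<in>U. a k j * b j x) = (if k = x then 1 else 0)"
    and R2: "\<And>k. k \<in> U \<Longrightarrow> (\<Sum>j\<in>U. b k j * a j x) = (if k = x then 1 else 0)"
  shows "\<exists>y\<in>U. principal_det a {x,y} \<noteq> 0 \<and> principal_det b {x,y} \<noteq> 0"
proof -
  have pa: "principal_det a {x,y} = a x x * a y y + a x y * a y x" if "y \<noteq> x" for y
    using pdet_pair[OF c2] that by metis
  have pb: "principal_det b {x,y} = b x x * b y y + b x y * b y x" if "y \<noteq> x" for y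
    using pdet_pair[OF c2] that by metis
  consider "a x x \<noteq> 0" "b x x \<noteq> 0" | "a x x = 0" "b x x = 0" | "a x x \<noteq> 0" "b x x = 0"
    | "a x x = 0" "b x x \<noteq> 0" by blast
  then show ?thesis
  proof cases
    case 1
    then show ?thesis using x by (intro bexI[of _ x]) (auto simp: pdet_single)
  next
    case 2
    have "(\<Sum>j\<in>U. a x j * b j x) \<noteq> 0" using R1[OF x] by simp
    then obtain j where j: "j \<in> U" "a x j * b j x \<noteq> 0" by (meson sum.neutral)
    hence jx: "j \<noteq> x" using 2 by auto
    have "principal_det a {x,j} \<noteq> 0" using pa[OF jx] 2 j syma[OF x j(1)] by auto
    moreover have "principal_det b {x,j} \<noteq> 0" using pb[OF jx] 2 j symb[OF x j(1)] by auto
    ultimately show ?thesis using j by blast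
  next
    case 3
    from core_half[OF c2 fin x syma symb R1 3]
    obtain y where y: "y \<in> U" "y \<noteq> x" "a x x * a y y + a x y * a y x \<noteq> 0" "b x y \<noteq> 0" by blast
    have "principal_det b {x,y} \<noteq> 0" using pb[OF y(2)] 3 y symb[OF x y(1)] by auto
    thus ?thesis using y pa[OF y(2)] by (intro bexI[of _ y]) auto
  next
    case 4
    from core_half[OF c2 fin x symb syma R2 4(2,1)]
    obtain y where y: "y \<in> U" "y \<noteq> x" "b x x * b y y + b x y * b y x \<noteq> 0" "a x y \<noteq> 0" by blast
    have "principal_det a {x,y} \<noteq> 0" using pa[OF y(2)] 4 y syma[OF x y(1)] by auto
    thus ?thesis using y pb[OF y(2)] by (intro bexI[of _ y]) auto
  qed
qed

lemma core_nat:
  fixes A :: "nat \<Rightarrow> nat \<Rightarrow> 'k::field"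
  assumes c2: "CHAR('k) = 2" and sym: "\<And>i j. i < n \<Longrightarrow> j < n \<Longrightarrow> A i j = A j i"
    and F: "F \<subseteq> {0..<n}" and G: "G \<subseteq> {0..<n}"
    and nzF: "principal_det A F \<noteq> 0" and nzG: "principal_det A G \<noteq> 0"
    and x: "x \<in> F \<triangle> G"
  shows "\<exists>y\<in>F \<triangle> G. principal_det A (F \<triangle> {x,y}) \<noteq> 0 \<and> principal_det A (G \<triangle> {x,y}) \<noteq> 0"
proof -
  obtain cf where cfs: "\<And>i j. i < n \<Longrightarrow> j < n \<Longrightarrow> cf i j = cf j i"
    and cfP: "\<And>W. W \<subseteq> {0..<n} \<Longrightarrow> selm n A F * selm n cf W = selm n A (F \<triangle> W)"
    using pivot[OF c2 sym F nzF] by blast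
  obtain cg where cgs: "\<And>i j. i < n \<Longrightarrow> j < n \<Longrightarrow> cg i j = cg j i"
    and cgP: "\<And>W. W \<subseteq> {0..<n} \<Longrightarrow> selm n A G * selm n cg W = selm n A (G \<triangle> W)"
    using pivot[OF c2 sym G nzG] by blast
  define U where "U = F \<triangle> G"
  have UV: "U \<subseteq> {0..<n}" using F G by (auto simp: U_def symdiff_def)
  have GF: "G \<triangle> F = U" by (auto simp: U_def symdiff_def)
  have finU: "finite U" using UV finite_subset by blast
  have R1: "(\<Sum>j\<in>U. cf k j * cg j x) = (if k = x then 1 else 0)" if "k \<in> U" for k
    using pivot_rel[OF F G nzF cfP cgP, of k x] that x unfolding U_def by simp
  have R2: "(\<Sum>j\<in>U. cg k j * cf j x) = (if k = x then 1 else 0)" if "k \<in> U" for k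
    using pivot_rel[OF G F nzG cgP cfP, of k x] that x unfolding GF U_def by simp
  have xU: "x \<in> U" using x U_def by simp
  obtain y where y: "y \<in> U" "principal_det cf {x,y} \<noteq> 0" "principal_det cg {x,y} \<noteq> 0"
  proof -
    have s1: "cf i j = cf j i" if "i \<in> U" "j \<in> U" for i j using UV that by (intro cfs) auto
    have s2: "cg i j = cg j i" if "i \<in> U" "j \<in> U" for i j using UV that by (intro cgs) auto
    show ?thesis using core[OF c2 finU xU, of cf cg, OF s1 s2 R1 R2] that by blast
  qed
  have xyV: "{x,y} \<subseteq> {0..<n}" using xU y(1) UV by auto
  have FxyV: "F \<triangle> {x,y} \<subseteq> {0..<n}" using F xyV by (auto simp: symdiff_def)
  have GxyV: "G \<triangle> {x,y} \<subseteq> {0..<n}" using G xyV by (auto simp: symdiff_def)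
  have "principal_det A (F \<triangle> {x,y}) = det (selm n A F * selm n cf {x,y})"
    using det_selm[OF FxyV, of A] cfP[OF xyV] by simp
  also have "\<dots> = principal_det A F * principal_det cf {x,y}"
    using det_mult[OF selm_carrier[of n A F] selm_carrier[of n cf "{x,y}"]] det_selm[OF F, of A] det_selm[OF xyV, of cf] by simp
  finally have 1: "principal_det A (F \<triangle> {x,y}) \<noteq> 0" using nzF y(2) by simp
  have "principal_det A (G \<triangle> {x,y}) = det (selm n A G * selm n cg {x,y})"
    using det_selm[OF GxyV, of A] cgP[OF xyV] by simp
  also have "\<dots> = principal_det A G * principal_det cg {x,y}"
    using det_mult[OF selm_carrier[of n A G] selm_carrier[of n cg "{x,y}"]] det_selm[OF G, of A] det_selm[OF xyV, of cg] by simp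
  finally have 2: "principal_det A (G \<triangle> {x,y}) \<noteq> 0" using nzG y(3) by simp
  show ?thesis using 1 2 y(1) unfolding U_def by blast
qed

lemma core_E:
  fixes A :: "'a \<Rightarrow> 'a \<Rightarrow> 'k::field"
  assumes c2: "CHAR('k) = 2" and fin: "finite E" and sym: "symmetric_on E A"
    and I: "I \<subseteq> E" and J: "J \<subseteq> E"
    and nzI: "principal_det A I \<noteq> 0" and nzJ: "principal_det A J \<noteq> 0"
    and x: "x \<in> I \<triangle> J"
  shows "\<exists>y\<in>I \<triangle> J. principal_det A (I \<triangle> {x,y}) \<noteq> 0 \<and> principal_det A (J \<triangle> {x,y}) \<noteq> 0"
proof -
  define n where "n = card E"
  obtain h where h: "bij_betw h {0..<n} E" using ex_bij_betw_nat_finite[OF fin] n_def by blast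
  have hinj: "inj_on h {0..<n}" and himg: "h ` {0..<n} = E" using h by (auto simp: bij_betw_def)
  define A' where "A' i j = A (h i) (h j)" for i j
  define pre where "pre S = {i\<in>{0..<n}. h i \<in> S}" for S
  have pre_bij: "bij_betw h (pre S) S" if "S \<subseteq> E" for S
  proof -
    have "h ` pre S = S" using himg that unfolding pre_def by auto
    moreover have "inj_on h (pre S)" using hinj unfolding pre_def by (auto intro: inj_on_subset)
    ultimately show ?thesis unfolding bij_betw_def by simp
  qed
  have pd: "principal_det A S = principal_det A' (pre S)" if "S \<subseteq> E" for S
    using pdet_reindex[OF c2 pre_bij[OF that], of A] unfolding A'_def by simp
  have preV: "pre S \<subseteq> {0..<n}" for S by (auto simp: pre_def)
  have sym': "A' i j = A' j i" if "i < n" "j < n" for i j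
    using sym himg that unfolding A'_def symmetric_on_def by auto
  have pre_sd: "pre (S \<triangle> T) = pre S \<triangle> pre T" for S T by (auto simp: pre_def symdiff_def)
  have xE: "x \<in> E" using x I J by (auto simp: symdiff_def)
  define x' where "x' = inv_into {0..<n} h x"
  have x': "x' < n" "h x' = x"
  proof -
    have "x \<in> h ` {0..<n}" using xE himg by simp
    thus "x' < n" "h x' = x" unfolding x'_def
      using inv_into_into[of x h "{0..<n}"] f_inv_into_f[of x h "{0..<n}"] by auto
  qed
  have x'in: "x' \<in> pre I \<triangle> pre J" using x x' unfolding pre_sd[symmetric] by (simp add: pre_def)
  obtain y' where y': "y' \<in> pre I \<triangle> pre J" "principal_det A' (pre I \<triangle> {x',y'}) \<noteq> 0"
    "principal_det A' (pre J \<triangle> {x',y'}) \<noteq> 0"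
  proof -
    have nzI': "principal_det A' (pre I) \<noteq> 0" using nzI pd[OF I] by simp
    have nzJ': "principal_det A' (pre J) \<noteq> 0" using nzJ pd[OF J] by simp
    show ?thesis using core_nat[OF c2 sym' preV[of I] preV[of J] nzI' nzJ' x'in] that by blast
  qed
  have y'n: "y' < n" using y'(1) by (auto simp: pre_def symdiff_def)
  have prexy: "pre {x, h y'} = {x', y'}"
  proof -
    have "i \<in> pre {x, h y'} \<longleftrightarrow> i \<in> {x', y'}" for i
    proof
      assume "i \<in> pre {x, h y'}"
      hence "i < n" "h i = h x' \<or> h i = h y'" using x' by (auto simp: pre_def)
      thus "i \<in> {x', y'}" using hinj x'(1) y'n by (auto dest: inj_onD)
    qed (use x' y'n in \<open>auto simp: pre_def\<close>)
    thus ?thesis by blast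
  qed
  have hy: "h y' \<in> I \<triangle> J" using y'(1) unfolding pre_sd[symmetric] by (simp add: pre_def)
  have hyE: "h y' \<in> E" using y'n himg by auto
  have s1: "I \<triangle> {x, h y'} \<subseteq> E" using I xE hyE by (auto simp: symdiff_def)
  have s2: "J \<triangle> {x, h y'} \<subseteq> E" using J xE hyE by (auto simp: symdiff_def)
  have "principal_det A (I \<triangle> {x, h y'}) \<noteq> 0" using pd[OF s1] y'(2) unfolding pre_sd prexy by simp
  moreover have "principal_det A (J \<triangle> {x, h y'}) \<noteq> 0" using pd[OF s2] y'(3) unfolding pre_sd prexy by simp
  ultimately show ?thesis using hy by blast
qed

theorem proposition2p31:
  fixes E :: "'a set" and Bs :: "'a set set"
  assumes "CHAR('k::{field,finite}) = 2"
    and "delta_matroid E Bs"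
    and "representable_over TYPE('k) E Bs"
  shows "strong_delta_matroid E Bs"
proof -
  note c2 = assms(1)
  from assms(3) obtain A :: "'a \<Rightarrow> 'a \<Rightarrow> 'k" and X where X: "X \<subseteq> E"
    and ss: "symmetric_on E A \<or> skew_symmetric_on E A" and Bs: "Bs = twist (DA_bases E A) X"
    unfolding representable_over_def by blast
  have sym: "symmetric_on E A"
    using ss char2_neg[OF c2] unfolding symmetric_on_def skew_symmetric_on_def by metis
  have fin: "finite E" and ne: "Bs \<noteq> {}" and sub: "\<forall>B\<in>Bs. B \<subseteq> E"
    using assms(2) unfolding delta_matroid_def by auto
  have sd_assoc: "(P \<triangle> Q) \<triangle> R = P \<triangle> (Q \<triangle> R)" for P Q R :: "'a set" by (auto simp: symdiff_def)
  have sd_comm: "P \<triangle> Q = Q \<triangle> P" for P Q :: "'a set" by (auto simp: symdiff_def)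
  have "\<exists>y\<in>B \<triangle> B'. B \<triangle> {x, y} \<in> Bs \<and> B' \<triangle> {x, y} \<in> Bs"
    if B: "B \<in> Bs" and B': "B' \<in> Bs" and x: "x \<in> B \<triangle> B'" for B B' x
  proof -
    obtain I where I: "I \<subseteq> E" "principal_det A I \<noteq> 0" "B = I \<triangle> X"
      using B unfolding Bs twist_def DA_bases_def by auto
    obtain J where J: "J \<subseteq> E" "principal_det A J \<noteq> 0" "B' = J \<triangle> X"
      using B' unfolding Bs twist_def DA_bases_def by auto
    have BB: "B \<triangle> B' = I \<triangle> J" unfolding I(3) J(3) by (auto simp: symdiff_def)
    obtain y where y: "y \<in> I \<triangle> J" "principal_det A (I \<triangle> {x,y}) \<noteq> 0" "principal_det A (J \<triangle> {x,y}) \<noteq> 0"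
      using core_E[OF c2 fin sym I(1) J(1) I(2) J(2)] x BB by auto
    have xy: "{x,y} \<subseteq> E" using x y(1) BB I(1) J(1) by (auto simp: symdiff_def)
    have "I \<triangle> {x,y} \<in> DA_bases E A" using y(2) I(1) xy by (auto simp: DA_bases_def symdiff_def)
    hence 1: "B \<triangle> {x,y} \<in> Bs" unfolding Bs twist_def I(3)
      by (rule rev_image_eqI) (auto simp: symdiff_def)
    have "J \<triangle> {x,y} \<in> DA_bases E A" using y(3) J(1) xy by (auto simp: DA_bases_def symdiff_def)
    hence 2: "B' \<triangle> {x,y} \<in> Bs" unfolding Bs twist_def J(3)
      by (rule rev_image_eqI) (auto simp: symdiff_def)
    show ?thesis using 1 2 y(1) BB by auto
  qed
  thus ?thesis unfolding strong_delta_matroid_def using fin ne sub by blast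
qed

end
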